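(* Let $k$ and $n$ be positive integers with $n\geq 4^k$. Let $H_{k,n}$ be the $n$-vertex graph consisting of a clique $K_k$ together with $n-k$ isolated vertices, and let $G_{k,n}$ be the $(n+1)$-vertex graph obtained from $H_{k,n}$ by adding a new vertex adjacent to all $n$ vertices of $H_{k,n}$. Then $r(G_{k,n}) > nk$.
   Context: For a graph $F$, the Ramsey number $r(F)$ is the minimum $N$ such that every two-coloring of the edges of $K_N$ contains a monochromatic copy of $F$. *)

theory Defs
  imports Main
begin

(* A finite simple graph F is given by a vertex set V and an edge set E,
   each edge being a 2-element subset of V. *)

(* A red/blue two-colouring of the edges of K_N (vertex set {0..<N}) is a
   function col :: nat set => bool; only its values on 2-subsets of {..<N}
   matter. *)
definition mono_copy :: "'a set \<Rightarrow> 'a set set \<Rightarrow> nat \<Rightarrow> (nat set \<Rightarrow> bool) \<Rightarrow> bool" where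
  "mono_copy V E N col \<longleftrightarrow>
     (\<exists>(f::'a \<Rightarrow> nat) (b::bool). inj_on f V \<and> f ` V \<subseteq> {..<N} \<and> (\<forall>e\<in>E. col (f ` e) = b))"

definition ramsey_number :: "'a set \<Rightarrow> 'a set set \<Rightarrow> nat" where
  "ramsey_number V E = (LEAST N. \<forall>col. mono_copy V E N col)"

(* G_{k,n}: vertices 0..n; clique on {0..<k}; vertices k..n-1 isolated in H_{k,n};
   vertex n is the apex adjacent to all of 0..n-1. *)
definition G_verts :: "nat \<Rightarrow> nat set" where
  "G_verts n = {..n}"

definition G_edges :: "nat \<Rightarrow> nat \<Rightarrow> nat set set" where
  "G_edges k n = {{i, j} | i j. i < k \<and> j < k \<and> i \<noteq> j} \<union> {{i, n} | i. i < n}"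

end

theory Submission
  imports Defs "HOL-Library.Ramsey"
begin

lemma G_edges_pair:
  assumes "e \<in> G_edges k n" "k \<le> n"
  shows "\<exists>i j. e = {i, j} \<and> i \<noteq> j \<and> i \<le> n \<and> j \<le> n"
  using assms unfolding G_edges_def by fastforce

lemma exists_N:
  assumes "k \<le> n"
  shows "\<exists>N. \<forall>col. mono_copy (G_verts n) (G_edges k n) N col"
proof -
  obtain r where r: "\<forall>(V::nat set) (E::nat set set). finite V \<and> card V \<ge> r \<longrightarrow>
    (\<exists>R \<subseteq> V. card R = Suc n \<and> clique R E \<or> card R = Suc n \<and> indep R E)"
    using ramsey2 by blast
  have "mono_copy (G_verts n) (G_edges k n) r col" for col
  proof -
    obtain R where R: "R \<subseteq> {..<r}" "card R = Suc n"
      "clique R {S. col S} \<or> indep R {S. col S}"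
      using r[rule_format, of "{..<r}" "{S. col S}"] by auto
    have "finite R" using R(1) finite_subset by blast
    then obtain h where h: "bij_betw h {0..<card R} R" using ex_bij_betw_nat_finite by blast
    have eq: "{0..<card R} = {..n}" using R(2) by auto
    have hb: "bij_betw h {..n} R" using h eq by simp
    have ed: "\<And>e. e \<in> G_edges k n \<Longrightarrow> \<exists>x y. h ` e = {x, y} \<and> x \<noteq> y \<and> x \<in> R \<and> y \<in> R"
    proof -
      fix e assume "e \<in> G_edges k n"
      then obtain i j where "e = {i, j}" "i \<noteq> j" "i \<le> n" "j \<le> n"
        using G_edges_pair assms by blast
      then show "\<exists>x y. h ` e = {x, y} \<and> x \<noteq> y \<and> x \<in> R \<and> y \<in> R"
        using hb unfolding bij_betw_def inj_on_def by force
    qed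
    show ?thesis
    proof (cases "clique R {S. col S}")
      case True
      then have "\<forall>e\<in>G_edges k n. col (h ` e) = True"
        using ed unfolding clique_def by fastforce
      then show ?thesis unfolding mono_copy_def G_verts_def
        using hb R(1) unfolding bij_betw_def by blast
    next
      case False
      then have "indep R {S. col S}" using R(3) by blast
      then have "\<forall>e\<in>G_edges k n. col (h ` e) = False"
        using ed unfolding indep_def by fastforce
      then show ?thesis unfolding mono_copy_def G_verts_def
        using hb R(1) unfolding bij_betw_def by blast
    qed
  qed
  then show ?thesis by blast
qed

lemma pair_div: "(\<forall>a\<in>f ` {i, j}. \<forall>c\<in>f ` {i, j}. a div (n::nat) = c div n) = (f i div n = f j div n)"
  by auto

lemma no_copy:
  assumes "k \<ge> 1" "k < n" "N \<le> n * k"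
  shows "\<not> mono_copy (G_verts n) (G_edges k n) N (\<lambda>S. \<forall>a\<in>S. \<forall>b\<in>S. a div n = b div n)"
proof
  assume "mono_copy (G_verts n) (G_edges k n) N (\<lambda>S. \<forall>a\<in>S. \<forall>b\<in>S. a div n = b div n)"
  then obtain f b where inj: "inj_on f {..n}" and img: "f ` {..n} \<subseteq> {..<N}"
    and col: "\<forall>e\<in>G_edges k n. (\<forall>a\<in>f ` e. \<forall>c\<in>f ` e. a div n = c div n) = b"
    unfolding mono_copy_def G_verts_def by (elim exE conjE) (rule that)
  have apex: "\<And>i. i < n \<Longrightarrow> (f i div n = f n div n) = b"
  proof -
    fix i assume "i < n"
    then have "{i, n} \<in> G_edges k n" unfolding G_edges_def by blast
    then show "(f i div n = f n div n) = b" using col pair_div[of f i n n] by metis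
  qed
  have cl: "\<And>i j. i < k \<Longrightarrow> j < k \<Longrightarrow> i \<noteq> j \<Longrightarrow> (f i div n = f j div n) = b"
  proof -
    fix i j assume "i < k" "j < k" "i \<noteq> j"
    then have "{i, j} \<in> G_edges k n" unfolding G_edges_def by blast
    then show "(f i div n = f j div n) = b" using col pair_div[of f i j n] by metis
  qed
  show False
  proof (cases b)
    case True
    let ?q = "f n div n"
    have "f ` {..n} \<subseteq> {?q * n..<?q * n + n}"
    proof
      fix x assume "x \<in> f ` {..n}"
      then obtain i where i: "i \<le> n" "x = f i" by auto
      have "f i div n = ?q" using apex[of i] True i by (cases "i = n") auto
      moreover have "x mod n < n" using assms by simp
      moreover have "x = x div n * n + x mod n" by simp
      ultimately show "x \<in> {?q * n..<?q * n + n}" using i by (simp only: atLeastLessThan_iff) linarith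
    qed
    then have "card (f ` {..n}) \<le> card {?q * n..<?q * n + n}" by (intro card_mono) auto
    then have "card (f ` {..n}) \<le> n" by simp
    moreover have "card (f ` {..n}) = Suc n" using inj card_image by fastforce
    ultimately show False by simp
  next
    case False
    let ?g = "\<lambda>i. f i div n"
    have "inj_on ?g (insert n {..<k})"
      unfolding inj_on_def
    proof (intro ballI impI)
      fix i j assume ij: "i \<in> insert n {..<k}" "j \<in> insert n {..<k}" "?g i = ?g j"
      show "i = j"
      proof (rule ccontr)
        assume ne: "i \<noteq> j"
        show False
        proof (cases "i = n")
          case True
          then have "j < k" using ij ne by auto
          then show ?thesis using apex[of j] ij False True assms by auto
        next
          case F: False
          then have "i < k" using ij by auto
          show ?thesis
          proof (cases "j = n")
            case True then show ?thesis using apex[of i] ij False \<open>i < k\<close> assms by auto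
          next
            case F2: False
            then have "j < k" using ij by auto
            then show ?thesis using cl[of i j] \<open>i < k\<close> ne ij False by auto
          qed
        qed
      qed
    qed
    moreover have "?g ` (insert n {..<k}) \<subseteq> {..<k}"
    proof
      fix y assume "y \<in> ?g ` (insert n {..<k})"
      then obtain i where i0: "i \<in> insert n {..<k}" "y = f i div n" by blast
      then have i: "i \<le> n" "y = f i div n" using assms by auto
      then have "f i < n * k" using img assms by auto
      then show "y \<in> {..<k}" using i by (simp add: less_mult_imp_div_less mult.commute)
    qed
    ultimately have "card (insert n {..<k}) \<le> card {..<k}"
      by (intro card_inj_on_le) auto
    then have "card (insert n {..<k}) \<le> k" by simp
    then show False using assms by simp
  qed
qed

theorem lemma2p2:
  fixes k n :: nat
  assumes "k \<ge> 1" and "n \<ge> 1" and "n \<ge> 4 ^ k"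
  shows "ramsey_number (G_verts n) (G_edges k n) > n * k"
proof -
  have kn: "k < n"
  proof -
    have "k < 2 ^ k" by simp
    also have "(2::nat) ^ k \<le> 4 ^ k" by (simp add: power_mono)
    finally show ?thesis using assms by simp
  qed
  obtain N where N: "\<forall>col. mono_copy (G_verts n) (G_edges k n) N col"
    using exists_N kn by fastforce
  have "\<forall>col. mono_copy (G_verts n) (G_edges k n) (ramsey_number (G_verts n) (G_edges k n)) col"
    unfolding ramsey_number_def using N by (rule LeastI)
  then show ?thesis using no_copy[OF assms(1) kn] by (meson not_less)
qed

end
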